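(* Let $R>0$, let $E\subset\mathbb{R}^d$ be a body, $a\in\partial\, co_R(E)$, and let $B=B(o,R)$ be an open ball of radius $R$ centered at the origin which $R$-supports $co_R(E)$ at $a$, i.e. $a\in\partial B$ and $B\cap co_R(E)=\emptyset$. Let $S=\partial B$, $\mathfrak F=E\cap S$, $F=\{\lambda x:\lambda\ge0,\ x\in\mathfrak F\}$ and $C=co(F)$. Assume that $C$ is pointed, i.e. $C\cap(-C)=\{o\}$, and that $a\notin C$. Then: (i) there exists $v\in S^{d-1}$ such that $\langle a,v\rangle>0$ and $\langle x,v\rangle<0$ for all $x\in\mathfrak F$; (ii) for this $v$, setting $B_t=\{x:|x-tv|<R\}$, for all sufficiently small $t>0$ one has $a\in B_t$ and $B_t\cap E=\emptyset$.
   Context: A body is a nonempty closed subset of $\mathbb{R}^d$; $o$ is the origin, $S^{d-1}$ the unit sphere, $co(\cdot)$ the convex hull. Fix $R>0$. The $R$-hulloid of a body $E$ is $co_R(E)=\bigcap\{\mathbb{R}^d\setminus B : B \text{ an open ball of radius } R,\ B\cap E=\emptyset\}$ (equal to $\mathbb{R}^d$ if no such ball exists). *)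

theory Defs
  imports "HOL-Analysis.Analysis"
begin

definition body :: "'a::euclidean_space set \<Rightarrow> bool" where
  "body E \<longleftrightarrow> E \<noteq> {} \<and> closed E"

text \<open>The R-hulloid: intersection of complements of all open balls of radius R
  disjoint from E (UNIV if there is none).\<close>
definition co_R :: "real \<Rightarrow> 'a::euclidean_space set \<Rightarrow> 'a set" where
  "co_R R E = \<Inter> {- ball c R | c. ball c R \<inter> E = {}}"

end

theory Submission
  imports Defs
begin


lemma cone_sum_in:
  assumes "convex_cone C" "finite S" "S \<subseteq> C" "\<forall>x\<in>S. 0 \<le> u x"
  shows "(\<Sum>x\<in>S. u x *\<^sub>R x) \<in> C"
  using assms(2-4)
proof (induction S rule: finite_induct)
  case empty then show ?case using assms(1) by (simp add: convex_cone_iff)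
next
  case (insert x S)
  then show ?case using assms(1) by (simp add: convex_cone_iff)
qed

lemma part1:
  fixes FF :: "'a::euclidean_space set"
  assumes R: "R > 0" and cF: "compact FF" and FS: "FF \<subseteq> sphere 0 R" and a: "a \<in> sphere 0 R"
    and F: "F = {l *\<^sub>R x | l x. l \<ge> 0 \<and> x \<in> FF}"
    and C: "C = convex hull F"
    and pt: "C \<inter> uminus ` C = {0}" and aC: "a \<notin> C"
  shows "\<exists>v. norm v = 1 \<and> a \<bullet> v > 0 \<and> (\<forall>x\<in>FF. x \<bullet> v < 0)"
proof (cases "FF = {}")
  case True
  show ?thesis
    by (rule exI[of _ "(1/R) *\<^sub>R a"]) (use R a True in \<open>auto simp: power2_eq_square dot_square_norm[symmetric]\<close>)
next
  case False
  define K where "K = convex hull FF"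
  have FFF: "FF \<subseteq> F" unfolding F
  proof
    fix x assume "x \<in> FF" then show "x \<in> {l *\<^sub>R x |l x. 0 \<le> l \<and> x \<in> FF}"
      by (intro CollectI exI[of _ 1] exI[of _ x]) simp
  qed
  have conF: "c *\<^sub>R y \<in> F" if yF: "y \<in> F" and c0: "c \<ge> 0" for y c
  proof -
    obtain l x where "y = l *\<^sub>R x" "l \<ge> 0" "x \<in> FF" using yF unfolding F by auto
    then show ?thesis unfolding F using c0
      by (intro CollectI exI[of _ "c * l"] exI[of _ x]) simp
  qed
  have conic: "conic C"
    unfolding conic_def
  proof (intro allI impI)
    fix x and c :: real assume xc: "x \<in> C" "0 \<le> c"
    then have "c *\<^sub>R x \<in> (\<lambda>x. c *\<^sub>R x) ` (convex hull F)" using C by auto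
    also have "\<dots> = convex hull ((\<lambda>x. c *\<^sub>R x) ` F)" by (simp add: convex_hull_scaling)
    also have "\<dots> \<subseteq> convex hull F" using conF xc by (intro hull_mono) auto
    finally show "c *\<^sub>R x \<in> C" using C by simp
  qed
  have FFC: "FF \<subseteq> C" using FFF hull_subset[of F convex] unfolding C by (rule subset_trans)
  have cvC: "convex C" unfolding C by (rule convex_convex_hull)
  have neC: "C \<noteq> {}" using FFC False by blast
  have ccC: "convex_cone C" unfolding convex_cone_def using conic cvC neC by blast
  have z: "0 \<notin> FF" using FS R by auto
  have K0: "0 \<notin> K"
  proof
    assume "0 \<in> K"
    then obtain S u where S: "finite S" "S \<subseteq> FF" "\<forall>x\<in>S. 0 \<le> u x" "sum u S = 1"
      "(\<Sum>v\<in>S. u v *\<^sub>R v) = 0"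
      unfolding K_def convex_hull_explicit by auto
    have "\<exists>x\<in>S. u x > 0"
    proof (rule ccontr)
      assume "\<not> (\<exists>x\<in>S. u x > 0)"
      then have "\<forall>x\<in>S. u x = 0" using S(3) by (meson not_le order_antisym)
      then have "sum u S = 0" by simp
      then show False using S(4) by simp
    qed
    then obtain x1 where x1: "x1 \<in> S" "u x1 > 0" by blast
    have "(\<Sum>v\<in>S. u v *\<^sub>R v) = u x1 *\<^sub>R x1 + (\<Sum>v\<in>S - {x1}. u v *\<^sub>R v)"
      using S(1) x1(1) by (simp add: sum.remove)
    then have eq: "- (u x1 *\<^sub>R x1) = (\<Sum>v\<in>S - {x1}. u v *\<^sub>R v)" using S(5)
      by (metis add.commute neg_eq_iff_add_eq_0)
    have m: "(\<Sum>v\<in>S - {x1}. u v *\<^sub>R v) \<in> C"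
      using S FFC by (intro cone_sum_in[OF ccC]) auto
    have p: "u x1 *\<^sub>R x1 \<in> C" using x1 S FFC ccC by (intro convex_cone_scaleR) auto
    have "u x1 *\<^sub>R x1 \<in> uminus ` C" using m eq by (metis image_eqI minus_minus)
    then have "u x1 *\<^sub>R x1 = 0" using p pt by blast
    then show False using x1 S(2) z by auto
  qed
  have cK: "compact K" unfolding K_def by (rule compact_convex_hull[OF cF])
  have KC: "K \<subseteq> C" unfolding K_def using FFC C by (simp add: hull_minimal convex_convex_hull)
  have H: "conic hull K \<subseteq> C" using KC conic by (simp add: hull_minimal)
  have clH: "closed (conic hull K)" using cK K0 by (intro closed_conic_hull_strong) auto
  have cvH: "convex (conic hull K)" unfolding K_def by (intro convex_conic_hull convex_convex_hull)
  have aH: "a \<notin> conic hull K" using H aC by auto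
  obtain w b where wb: "w \<bullet> a < b" "\<forall>x\<in>conic hull K. w \<bullet> x > b"
    using separating_hyperplane_closed_point[OF cvH clH aH] by auto
  have Kne: "K \<noteq> {}" unfolding K_def using False by simp
  have "0 \<in> conic hull K" using Kne by simp
  then have b0: "b < 0" using wb(2) by fastforce
  have wx: "w \<bullet> x \<ge> 0" if "x \<in> FF" for x
  proof (rule ccontr)
    assume "\<not> w \<bullet> x \<ge> 0"
    then have neg: "w \<bullet> x < 0" by simp
    define t where "t = b / (w \<bullet> x)"
    have t0: "t \<ge> 0" unfolding t_def using neg b0 by (simp add: divide_nonpos_neg)
    have "x \<in> K" unfolding K_def using that by (simp add: hull_inc)
    then have "t *\<^sub>R x \<in> conic hull K" using t0 by (simp add: conic_hull_explicit) blast
    then have "w \<bullet> (t *\<^sub>R x) > b" using wb(2) by blast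
    moreover have "w \<bullet> (t *\<^sub>R x) = b" unfolding t_def using neg by simp
    ultimately show False by simp
  qed
  obtain u c where uc: "u \<noteq> 0" "0 < c" "\<forall>x\<in>K. u \<bullet> x > c"
    using separating_hyperplane_closed_0[OF _ compact_imp_closed[OF cK] K0] unfolding K_def
    by (auto simp: convex_convex_hull)
  have ux: "u \<bullet> x > c" if "x \<in> FF" for x using uc(3) that unfolding K_def by (simp add: hull_inc)
  define \<epsilon> where "\<epsilon> = (- (w \<bullet> a)) / (1 + \<bar>u \<bullet> a\<bar>)"
  have e0: "\<epsilon> > 0" unfolding \<epsilon>_def using wb(1) b0 by (intro divide_pos_pos) auto
  define v0 where "v0 = - w - \<epsilon> *\<^sub>R u"
  have "\<epsilon> * \<bar>u \<bullet> a\<bar> < - (w \<bullet> a)"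
  proof -
    have "\<epsilon> * \<bar>u \<bullet> a\<bar> < \<epsilon> * (1 + \<bar>u \<bullet> a\<bar>)" using e0 by simp
    also have "\<dots> = - (w \<bullet> a)" unfolding \<epsilon>_def by (simp add: add_pos_nonneg)
    finally show ?thesis .
  qed
  then have av0: "a \<bullet> v0 > 0" unfolding v0_def
    by (simp add: inner_diff_right inner_commute) (smt (verit) abs_ge_self abs_minus_cancel mult_left_mono e0)
  have xv0: "x \<bullet> v0 < 0" if "x \<in> FF" for x
  proof -
    have "\<epsilon> * (u \<bullet> x) > 0" using e0 ux[OF that] uc(2) by simp
    then show ?thesis using wx[OF that] unfolding v0_def
      by (simp add: inner_diff_right inner_commute)
  qed
  have nz: "v0 \<noteq> 0" using av0 by auto
  show ?thesis
    by (rule exI[of _ "(1 / norm v0) *\<^sub>R v0"]) (use nz av0 xv0 in \<open>auto simp: zero_less_mult_iff mult_less_0_iff divide_neg_pos\<close>)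
qed


lemma normsq_diff: fixes x v :: "'a::real_inner"
  shows "(norm (x - t *\<^sub>R v))^2 = (norm x)^2 - 2*t*(x \<bullet> v) + t^2 * (norm v)^2"
  unfolding power2_norm_eq_inner
  by (simp add: inner_diff_left inner_diff_right inner_commute algebra_simps power2_eq_square)

lemma part2:
  fixes E :: "'a::euclidean_space set"
  assumes R: "R > 0" and cE: "closed E" and dis: "ball 0 R \<inter> E = {}"
    and neg: "\<forall>x\<in>E \<inter> sphere 0 R. x \<bullet> v < 0" and nv: "norm v = 1"
    and a: "a \<in> sphere 0 R" and av: "a \<bullet> v > 0"
  shows "\<forall>\<^sub>F t in at_right 0. a \<in> ball (t *\<^sub>R v) R \<and> ball (t *\<^sub>R v) R \<inter> E = {}"
proof -
  define G where "G = E \<inter> cball 0 (R+1) \<inter> {x. v \<bullet> x \<ge> 0}"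
  have cG: "compact G" unfolding G_def
    by (intro compact_Int_closed closed_halfspace_ge closed_Int_compact cE compact_cball)
  have ge: "norm x \<ge> R" if "x \<in> E" for x 
  proof (rule ccontr)
    assume "\<not> R \<le> norm x" then have "x \<in> ball 0 R" by (simp add: dist_norm)
    then show False using dis that by blast
  qed
  have gt: "norm x > R" if "x \<in> G" for x
  proof -
    have "x \<in> E" "v \<bullet> x \<ge> 0" using that by (auto simp: G_def)
    moreover have "norm x \<noteq> R"
    proof
      assume "norm x = R" then have "x \<in> E \<inter> sphere 0 R" using \<open>x\<in>E\<close> by auto
      then show False using neg \<open>v \<bullet> x \<ge> 0\<close> by (metis inner_commute not_le)
    qed
    ultimately show ?thesis using ge by force
  qed
  obtain m where m0: "m > 0" and mG: "\<And>x. x \<in> G \<Longrightarrow> norm x \<ge> R + m"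
  proof (cases "G = {}")
    case True then show ?thesis using that[of 1] by auto
  next
    case False
    obtain x0 where x0: "x0 \<in> G" "\<forall>y\<in>G. norm x0 \<le> norm y"
      using continuous_attains_inf[OF cG False continuous_on_norm_id] by auto
    show ?thesis using that[of "norm x0 - R"] gt[OF x0(1)] x0(2) by auto
  qed
  show ?thesis unfolding eventually_at_right_field
  proof (intro exI[of _ "min (min 1 m) (2 * (a \<bullet> v))"] conjI allI impI)
    show "0 < min (min 1 m) (2 * (a \<bullet> v))" using m0 av by auto
    fix t :: real assume t0: "t > 0" and tb: "t < min (min 1 m) (2 * (a \<bullet> v))"
    have tt: "t*t < t*(2*(a \<bullet> v))" using t0 tb by (intro mult_strict_left_mono) auto
    have "(norm (a - t *\<^sub>R v))^2 < R^2"
    proof -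
      have "(norm (a - t *\<^sub>R v))^2 = R^2 - 2*t*(a \<bullet> v) + t*t"
        using normsq_diff[of a t v] a nv by (simp add: power2_eq_square)
      then show ?thesis using tt by (simp add: algebra_simps)
    qed
    then have "norm (a - t *\<^sub>R v) < R" using R by (smt (verit) norm_ge_zero power_mono)
    then show "a \<in> ball (t *\<^sub>R v) R" by (simp add: dist_norm norm_minus_commute)
    show "ball (t *\<^sub>R v) R \<inter> E = {}"
    proof (rule ccontr)
      assume "ball (t *\<^sub>R v) R \<inter> E \<noteq> {}"
      then obtain x where xE: "x \<in> E" and xb: "norm (x - t *\<^sub>R v) < R"
        by (auto simp: dist_norm norm_minus_commute)
      have tri: "norm x - t \<le> norm (x - t *\<^sub>R v)"
        using norm_triangle_ineq2[of x "t *\<^sub>R v"] nv t0 by simp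
      show False
      proof (cases "v \<bullet> x \<ge> 0")
        case False
        have "(norm (x - t *\<^sub>R v))^2 > (norm x)^2"
        proof -
          have h1: "t*(v \<bullet> x) < 0" using False t0 by (simp add: mult_pos_neg)
          have h2: "t*t > 0" using t0 by simp
          have "(norm (x - t *\<^sub>R v))^2 = (norm x)^2 - 2*t*(v \<bullet> x) + t*t"
            using normsq_diff[of x t v] nv by (simp add: power2_eq_square inner_commute)
          then show ?thesis using h1 h2 by linarith
        qed
        moreover have "(norm (x - t *\<^sub>R v))^2 < (norm x)^2"
          using xb ge[OF xE] by (intro power_strict_mono) auto
        ultimately show False by simp
      next
        case True
        show False
        proof (cases "norm x \<le> R + 1")
          case True
          then have "x \<in> G" using \<open>v \<bullet> x \<ge> 0\<close> xE by (auto simp: G_def)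
          then show False using mG tri xb tb by force
        next
          case False then show False using tri xb tb by auto
        qed
      qed
    qed
  qed
qed


theorem mainTheorem3:
  fixes E :: "'a::euclidean_space set" and R :: real and a :: 'a
  assumes "R > 0"
    and "body E"
    and "a \<in> frontier (co_R R E)"
    and "a \<in> sphere 0 R"
    and "ball 0 R \<inter> co_R R E = {}"
    and "FF = E \<inter> sphere 0 R"
    and "F = {l *\<^sub>R x | l x. l \<ge> 0 \<and> x \<in> FF}"
    and "C = convex hull F"
    and "C \<inter> uminus ` C = {0}"
    and "a \<notin> C"
  shows "(\<exists>v. norm v = 1 \<and> a \<bullet> v > 0 \<and> (\<forall>x\<in>FF. x \<bullet> v < 0))
       \<and> (\<forall>v. norm v = 1 \<and> a \<bullet> v > 0 \<and> (\<forall>x\<in>FF. x \<bullet> v < 0) \<longrightarrow>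
            (\<forall>\<^sub>F t in at_right 0. a \<in> ball (t *\<^sub>R v) R \<and> ball (t *\<^sub>R v) R \<inter> E = {}))"
proof
  have cE: "closed E" using assms(2) by (simp add: body_def)
  have sub: "E \<subseteq> co_R R E" unfolding co_R_def by blast
  have dis: "ball 0 R \<inter> E = {}" using assms(5) sub by blast
  have cF: "compact FF" unfolding assms(6) by (intro closed_Int_compact cE compact_sphere)
  show "\<exists>v. norm v = 1 \<and> a \<bullet> v > 0 \<and> (\<forall>x\<in>FF. x \<bullet> v < 0)"
    by (rule part1[OF assms(1) cF _ assms(4) assms(7) assms(8) assms(9) assms(10)]) (simp add: assms(6))
  show "\<forall>v. norm v = 1 \<and> a \<bullet> v > 0 \<and> (\<forall>x\<in>FF. x \<bullet> v < 0) \<longrightarrow>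
            (\<forall>\<^sub>F t in at_right 0. a \<in> ball (t *\<^sub>R v) R \<and> ball (t *\<^sub>R v) R \<inter> E = {})"
    using part2[OF assms(1) cE dis _ _ assms(4)] assms(6) by blast
qed

end
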